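(* Let $a_x,b_x$ be linearly independent linear forms. (B) For a quadratic form $f$: $J^2[f,a_xb_x,u_x^2]=0$ (identically in $u$) iff $f=a_0a_x^2+b_0b_x^2$ for some $a_0,b_0\in\mathbb C$. (C) For a cubic form $f$: $J^2[f,a_xb_x,u_x^2]=0$ (identically in $x$ and $u$) iff $f=a_0a_x^3+b_0b_x^3$ for some $a_0,b_0\in\mathbb C$.
   Context: Forms are homogeneous polynomials with complex coefficients in $x=(x_1,x_2,x_3)$. For $a\in\mathbb C^3$, $a_x=\sum a_ix_i$. The variables $u=(u_1,u_2,u_3)$ are indeterminates with $u_x=\sum u_ix_i$. The second transvectant is $J^2[f,g,h]=\big(\Omega^2(f(x)g(y)h(z))\big)|_{y=z=x}$, where $\Omega$ is the determinant of the operator matrix with rows $(\partial/\partial x_i)$, $(\partial/\partial y_i)$, $(\partial/\partial z_i)$, and $u$ is treated as constant. *)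

theory Defs
  imports "HOL-Analysis.Analysis"
begin

text \<open>Points of C^3 are vectors of type complex^3. A form is represented by
its polynomial function C^3 -> C.\<close>

definition lform :: "complex^3 \<Rightarrow> complex^3 \<Rightarrow> complex" where
  "lform a x = (\<Sum>i\<in>UNIV. a$i * x$i)"

definition is_quadratic_form :: "(complex^3 \<Rightarrow> complex) \<Rightarrow> bool" where
  "is_quadratic_form f \<longleftrightarrow>
     (\<exists>c :: 3 \<Rightarrow> 3 \<Rightarrow> complex. f = (\<lambda>x. \<Sum>i\<in>UNIV. \<Sum>j\<in>UNIV. c i j * x$i * x$j))"

definition is_cubic_form :: "(complex^3 \<Rightarrow> complex) \<Rightarrow> bool" where
  "is_cubic_form f \<longleftrightarrow>
     (\<exists>c :: 3 \<Rightarrow> 3 \<Rightarrow> 3 \<Rightarrow> complex.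
        f = (\<lambda>x. \<Sum>i\<in>UNIV. \<Sum>j\<in>UNIV. \<Sum>k\<in>UNIV. c i j k * x$i * x$j * x$k))"

definition pd :: "3 \<Rightarrow> (complex^3 \<Rightarrow> complex) \<Rightarrow> complex^3 \<Rightarrow> complex" where
  "pd i f x = deriv (\<lambda>t. f (x + t *s axis i 1)) 0"

text \<open>Second transvectant: Omega^2 applied to f(x)g(y)h(z), then y = z = x.
  Expanding Omega = sum over sigma of sgn(sigma) d_{x,sigma 1} d_{y,sigma 2} d_{z,sigma 3},
  Omega^2 (f(x) g(y) h(z)) is the double sum below (with x,y,z separate); setting y=z=x gives:\<close>
definition J2 :: "(complex^3 \<Rightarrow> complex) \<Rightarrow> (complex^3 \<Rightarrow> complex) \<Rightarrow> (complex^3 \<Rightarrow> complex)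
                   \<Rightarrow> complex^3 \<Rightarrow> complex" where
  "J2 f g h x = (\<Sum>\<sigma>\<in>{\<sigma>. \<sigma> permutes (UNIV :: 3 set)}. \<Sum>\<tau>\<in>{\<tau>. \<tau> permutes (UNIV :: 3 set)}.
      of_int (sign \<sigma> * sign \<tau>)
      * pd (\<sigma> 1) (pd (\<tau> 1) f) x
      * pd (\<sigma> 2) (pd (\<tau> 2) g) x
      * pd (\<sigma> 3) (pd (\<tau> 3) h) x)"

end

theory Submission
  imports Defs
begin


lemma pd_poly:
  assumes "\<And>t. f (x + t *s axis i 1) = A + B*t + C*t^2 + E*t^3"
  shows "pd i f x = B"
proof -
  have "(\<lambda>t. f (x + t *s axis i 1)) = (\<lambda>t. A + B*t + C*t^2 + E*t^3)" using assms by auto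
  moreover have "((\<lambda>t. A + B*t + C*t^2 + E*t^3) has_field_derivative B) (at 0)"
    by (rule derivative_eq_intros refl | simp)+
  ultimately show ?thesis unfolding pd_def using DERIV_imp_deriv by metis
qed

lemma pd_lin:
  "pd j (\<lambda>x. \<Sum>l\<in>UNIV. d l * x$l) x = d j"
  apply (rule pd_poly[where A="\<Sum>l\<in>UNIV. d l * x$l" and C=0 and E=0])
  using exhaust_3[of j] by (auto simp: sum_3 axis_def algebra_simps)

lemma pd_quad:
  "pd j (\<lambda>x. \<Sum>i\<in>UNIV. \<Sum>k\<in>UNIV. c i k * x$i * x$k) x = (\<Sum>l\<in>UNIV. (c j l + c l j) * x$l)"
  apply (rule pd_poly[where A="\<Sum>i\<in>UNIV. \<Sum>k\<in>UNIV. c i k * x$i * x$k" and C="c j j" and E=0])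
  using exhaust_3[of j] by (auto simp: sum_3 axis_def algebra_simps power2_eq_square)

lemma pd_cub:
  "pd j (\<lambda>x. \<Sum>i\<in>UNIV. \<Sum>k\<in>UNIV. \<Sum>m\<in>UNIV. c i k m * x$i * x$k * x$m) x
    = (\<Sum>k\<in>UNIV. \<Sum>l\<in>UNIV. (c j k l + c k j l + c k l j) * x$k * x$l)"
  apply (rule pd_poly[where A="\<Sum>i\<in>UNIV. \<Sum>k\<in>UNIV. \<Sum>m\<in>UNIV. c i k m * x$i * x$k * x$m"
     and C="\<Sum>l\<in>UNIV. (c j j l + c j l j + c l j j) * x$l" and E="c j j j"])
  using exhaust_3[of j] by (auto simp: sum_3 axis_def algebra_simps power2_eq_square power3_eq_cube)


definition Jm :: "(3 \<Rightarrow> 3 \<Rightarrow> complex) \<Rightarrow> (3 \<Rightarrow> 3 \<Rightarrow> complex) \<Rightarrow> (3 \<Rightarrow> 3 \<Rightarrow> complex) \<Rightarrow> complex" where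
  "Jm A B C = (\<Sum>\<sigma>\<in>{\<sigma>. \<sigma> permutes (UNIV :: 3 set)}. \<Sum>\<tau>\<in>{\<tau>. \<tau> permutes (UNIV :: 3 set)}.
      of_int (sign \<sigma> * sign \<tau>) * A (\<sigma> 1) (\<tau> 1) * B (\<sigma> 2) (\<tau> 2) * C (\<sigma> 3) (\<tau> 3))"

lemma Jm_expl: "Jm A B C =
  (A 1 1 * B 2 2 * C 3 3 - A 1 1 * B 2 3 * C 3 2 - A 1 2 * B 2 1 * C 3 3 + A 1 2 * B 2 3 * C 3 1 + A 1 3 * B 2 1 * C 3 2 - A 1 3 * B 2 2 * C 3 1)
 -(A 1 1 * B 3 2 * C 2 3 - A 1 1 * B 3 3 * C 2 2 - A 1 2 * B 3 1 * C 2 3 + A 1 2 * B 3 3 * C 2 1 + A 1 3 * B 3 1 * C 2 2 - A 1 3 * B 3 2 * C 2 1)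
 -(A 2 1 * B 1 2 * C 3 3 - A 2 1 * B 1 3 * C 3 2 - A 2 2 * B 1 1 * C 3 3 + A 2 2 * B 1 3 * C 3 1 + A 2 3 * B 1 1 * C 3 2 - A 2 3 * B 1 2 * C 3 1)
 +(A 2 1 * B 3 2 * C 1 3 - A 2 1 * B 3 3 * C 1 2 - A 2 2 * B 3 1 * C 1 3 + A 2 2 * B 3 3 * C 1 1 + A 2 3 * B 3 1 * C 1 2 - A 2 3 * B 3 2 * C 1 1)
 +(A 3 1 * B 1 2 * C 2 3 - A 3 1 * B 1 3 * C 2 2 - A 3 2 * B 1 1 * C 2 3 + A 3 2 * B 1 3 * C 2 1 + A 3 3 * B 1 1 * C 2 2 - A 3 3 * B 1 2 * C 2 1)
 -(A 3 1 * B 2 2 * C 1 3 - A 3 1 * B 2 3 * C 1 2 - A 3 2 * B 2 1 * C 1 3 + A 3 2 * B 2 3 * C 1 1 + A 3 3 * B 2 1 * C 1 2 - A 3 3 * B 2 2 * C 1 1)"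
proof -
  have f123: "finite {2::3, 3}" "1 \<notin> {2::3, 3}"
    by auto
  have f23: "finite {3::3}" "2 \<notin> {3::3}"
    by auto
  show ?thesis
    unfolding Jm_def UNIV_3
    unfolding sum_over_permutations_insert[OF f123]
    unfolding sum_over_permutations_insert[OF f23]
    unfolding permutes_sing
    by (simp add: sign_swap_id permutation_swap_id sign_compose sign_id swap_id_eq algebra_simps)
qed


definition cr :: "complex^3 \<Rightarrow> complex^3 \<Rightarrow> complex^3" where
  "cr a u = vector [a$2*u$3 - a$3*u$2, a$3*u$1 - a$1*u$3, a$1*u$2 - a$2*u$1]"

definition bil :: "(3 \<Rightarrow> 3 \<Rightarrow> complex) \<Rightarrow> complex^3 \<Rightarrow> complex^3 \<Rightarrow> complex" where
  "bil A v w = (\<Sum>i\<in>UNIV. \<Sum>j\<in>UNIV. v$i * A i j * w$j)"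

lemma cr_nth: "cr a u $ 1 = a$2*u$3 - a$3*u$2" "cr a u $ 2 = a$3*u$1 - a$1*u$3" "cr a u $ 3 = a$1*u$2 - a$2*u$1"
  by (simp_all add: cr_def)

lemma Jm_key:
  assumes "\<And>i j. A i j = A j i"
  shows "Jm A (\<lambda>i j. a$j*b$i + a$i*b$j) (\<lambda>i j. u$j*u$i + u$i*u$j) = 4 * bil A (cr a u) (cr b u)"
proof -
  have s: "A 2 1 = A 1 2" "A 3 1 = A 1 3" "A 3 2 = A 2 3" using assms by auto
  show ?thesis unfolding Jm_expl bil_def sum_3 cr_nth s
    by (simp add: algebra_simps)
qed


lemma bil_add_left: "bil A (v + w) z = bil A v z + bil A w z"
  by (simp add: bil_def sum_3 algebra_simps)
lemma bil_add_right: "bil A z (v + w) = bil A z v + bil A z w"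
  by (simp add: bil_def sum_3 algebra_simps)
lemma bil_diff_left: "bil A (v - w) z = bil A v z - bil A w z"
  by (simp add: bil_def sum_3 algebra_simps)
lemma bil_diff_right: "bil A z (v - w) = bil A z v - bil A z w"
  by (simp add: bil_def sum_3 algebra_simps)
lemma bil_neg_left: "bil A (- v) z = - bil A v z"
  by (simp add: bil_def sum_3 algebra_simps)
lemma bil_neg_right: "bil A z (- v) = - bil A z v"
  by (simp add: bil_def sum_3 algebra_simps)
lemma bil_scale_left: "bil A (s *s v) z = s * bil A v z"
  by (simp add: bil_def sum_3 algebra_simps)
lemma bil_scale_right: "bil A z (s *s v) = s * bil A z v"
  by (simp add: bil_def sum_3 algebra_simps)
lemma bil_sym: "(\<And>i j. A i j = A j i) \<Longrightarrow> bil A v w = bil A w v"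
  by (simp add: bil_def sum_3 algebra_simps)

lemmas bil_lin = bil_add_left bil_add_right bil_diff_left bil_diff_right bil_neg_left bil_neg_right
  bil_scale_left bil_scale_right

lemma cr_add_right: "cr a (v + w) = cr a v + cr a w"
  by (simp add: vec_eq_iff forall_3 cr_nth algebra_simps)
lemma cr_self: "cr a a = 0"
  by (simp add: vec_eq_iff forall_3 cr_nth algebra_simps)
lemma cr_anti: "cr a b = - cr b a"
  by (simp add: vec_eq_iff forall_3 cr_nth algebra_simps)

lemma decomp:
  "lform a (cr b c) *s x = lform a x *s cr b c + lform b x *s cr c a + lform c x *s cr a b"
  by (simp add: vec_eq_iff forall_3 cr_nth lform_def sum_3 algebra_simps)

lemma zeros:
  assumes Q: "\<And>u. bil A (cr a u) (cr b u) = 0"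
  shows "bil A (cr c a) (cr b c) = 0" "bil A (cr a b) (cr a b) = 0"
        "bil A (cr c a) (cr a b) = 0" "bil A (cr a b) (cr b c) = 0"
proof -
  have ac: "cr a c = - cr c a" and ba: "cr b a = - cr a b" by (rule cr_anti)+
  have 1: "bil A (cr c a) (cr b c) = 0" using Q[of c] by (simp add: ac bil_lin)
  have 2: "bil A (cr a b) (cr a b) = 0" using Q[of "a+b"]
    by (simp add: cr_add_right cr_self ba bil_lin)
  have 3: "bil A (cr c a) (cr a b) = 0" using Q[of "a+c"] 1
    by (simp add: cr_add_right cr_self ac ba bil_lin)
  have 4: "bil A (cr a b) (cr b c) = 0" using Q[of "b+c"] 1
    by (simp add: cr_add_right cr_self ac bil_lin)
  show "bil A (cr c a) (cr b c) = 0" "bil A (cr a b) (cr a b) = 0"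
        "bil A (cr c a) (cr a b) = 0" "bil A (cr a b) (cr b c) = 0" using 1 2 3 4 by auto
qed

lemma core:
  assumes sym: "\<And>i j. A i j = A j i" and Q: "\<And>u. bil A (cr a u) (cr b u) = 0"
  shows "(lform a (cr b c))^2 * bil A x x
     = (lform a x)^2 * bil A (cr b c) (cr b c) + (lform b x)^2 * bil A (cr c a) (cr c a)"
proof -
  have z: "bil A (cr c a) (cr b c) = 0" "bil A (cr a b) (cr a b) = 0"
        "bil A (cr c a) (cr a b) = 0" "bil A (cr a b) (cr b c) = 0"
    using zeros[OF Q] by blast+
  have z': "bil A (cr b c) (cr c a) = 0" "bil A (cr a b) (cr c a) = 0" "bil A (cr b c) (cr a b) = 0"
    using z bil_sym[of A "cr b c" "cr c a", OF sym] bil_sym[of A "cr a b" "cr c a", OF sym]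
      bil_sym[of A "cr b c" "cr a b", OF sym] by simp_all
  let ?D = "lform a (cr b c)"
  have "?D^2 * bil A x x = bil A (?D *s x) (?D *s x)"
    by (simp add: bil_lin power2_eq_square)
  also have "\<dots> = bil A (lform a x *s cr b c + lform b x *s cr c a + lform c x *s cr a b)
                         (lform a x *s cr b c + lform b x *s cr c a + lform c x *s cr a b)"
    by (simp only: decomp)
  also have "\<dots> = (lform a x)^2 * bil A (cr b c) (cr b c) + (lform b x)^2 * bil A (cr c a) (cr c a)"
    by (simp only: bil_lin) (simp add: z z' power2_eq_square algebra_simps)
  finally show ?thesis .
qed

lemma bil_rank2: "bil (\<lambda>i j. al * v$i * v$j + be * w$i * w$j) y z
   = al * lform v y * lform v z + be * lform w y * lform w z"
  by (simp add: bil_def lform_def sum_3 algebra_simps)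

lemma lform_cr: "lform a (cr a u) = 0"
  by (simp add: lform_def sum_3 cr_nth algebra_simps)

lemma back_zero: "bil (\<lambda>i j. al * a$i * a$j + be * b$i * b$j) (cr a u) (cr b u) = 0"
proof -
  have "lform b (cr b u) = 0" by (rule lform_cr)
  then show ?thesis by (simp add: bil_rank2 lform_cr)
qed


definition Sy :: "(3\<Rightarrow>3\<Rightarrow>3\<Rightarrow>complex) \<Rightarrow> 3\<Rightarrow>3\<Rightarrow>3\<Rightarrow>complex" where
  "Sy c i j m = c i j m + c i m j + c j i m + c j m i + c m i j + c m j i"
definition Hc :: "(3\<Rightarrow>3\<Rightarrow>3\<Rightarrow>complex) \<Rightarrow> complex^3 \<Rightarrow> 3\<Rightarrow>3\<Rightarrow>complex" where
  "Hc c y = (\<lambda>i j. \<Sum>m\<in>UNIV. Sy c i j m * y$m)"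

lemma Hc_sym: "Hc c y i j = Hc c y j i"
  by (simp add: Hc_def Sy_def sum_3 algebra_simps)

lemma Hc_swap: "bil (Hc c y) v w = bil (Hc c v) y w"
  by (simp add: bil_def Hc_def Sy_def sum_3 algebra_simps)

lemma Hc_add: "bil (Hc c (y + z)) v w = bil (Hc c y) v w + bil (Hc c z) v w"
  by (metis Hc_swap bil_add_left)
lemma Hc_scale: "bil (Hc c (s *s y)) v w = s * bil (Hc c y) v w"
  by (metis Hc_swap bil_scale_left)

lemma cub_repr: "(\<Sum>i\<in>UNIV. \<Sum>k\<in>UNIV. \<Sum>m\<in>UNIV. c i k m * x$i * x$k * x$m) = bil (Hc c x) x x / 6"
  by (simp add: bil_def Hc_def Sy_def sum_3 algebra_simps)

lemma quad_repr: "(\<Sum>i\<in>UNIV. \<Sum>k\<in>UNIV. c i k * x$i * x$k) = bil (\<lambda>i j. c j i + c i j) x x / 2"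
  by (simp add: bil_def sum_3 algebra_simps)

lemma core_cub:
  assumes Q: "\<And>y u. bil (Hc c y) (cr a u) (cr b u) = 0"
  shows "(lform a (cr b e))^3 * bil (Hc c x) x x
     = (lform a x)^3 * bil (Hc c (cr b e)) (cr b e) (cr b e) + (lform b x)^3 * bil (Hc c (cr e a)) (cr e a) (cr e a)"
proof -
  define p where "p = cr b e"
  define q where "q = cr e a"
  define r where "r = cr a b"
  define D where "D = lform a p"
  have z: "bil (Hc c y) q p = 0" "bil (Hc c y) r r = 0"
        "bil (Hc c y) q r = 0" "bil (Hc c y) r p = 0" for y
    using zeros[OF Q[of y]] unfolding p_def q_def r_def by blast+
  have sy: "bil (Hc c y) v w = bil (Hc c y) w v" for y v w
    by (rule bil_sym, rule Hc_sym)
  have c2: "D^2 * bil (Hc c x) x x = (lform a x)^2 * bil (Hc c x) p p + (lform b x)^2 * bil (Hc c x) q q"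
    unfolding D_def p_def q_def by (rule core[OF Hc_sym Q])
  have dec: "D *s x = lform a x *s p + lform b x *s q + lform e x *s r"
    unfolding D_def p_def q_def r_def by (rule decomp)
  have e1: "D * bil (Hc c x) p p = lform a x * bil (Hc c p) p p"
  proof -
    have "D * bil (Hc c x) p p = bil (Hc c (D *s x)) p p" by (simp add: Hc_scale)
    also have "\<dots> = lform a x * bil (Hc c p) p p + lform b x * bil (Hc c q) p p + lform e x * bil (Hc c r) p p"
      by (simp add: dec Hc_add Hc_scale)
    also have "bil (Hc c q) p p = 0" using Hc_swap[of c q p p] z(1)[of p] by simp
    also have "bil (Hc c r) p p = 0" using Hc_swap[of c r p p] z(4)[of p] by simp
    finally show ?thesis by simp
  qed
  have e2: "D * bil (Hc c x) q q = lform b x * bil (Hc c q) q q"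
  proof -
    have "D * bil (Hc c x) q q = bil (Hc c (D *s x)) q q" by (simp add: Hc_scale)
    also have "\<dots> = lform a x * bil (Hc c p) q q + lform b x * bil (Hc c q) q q + lform e x * bil (Hc c r) q q"
      by (simp add: dec Hc_add Hc_scale)
    also have "bil (Hc c p) q q = 0" using Hc_swap[of c p q q] z(1)[of q] sy[of q p q] by simp
    also have "bil (Hc c r) q q = 0" using Hc_swap[of c r q q] z(3)[of q] sy[of q r q] by simp
    finally show ?thesis by simp
  qed
  have "D^3 * bil (Hc c x) x x = D * (D^2 * bil (Hc c x) x x)" by (simp add: power3_eq_cube power2_eq_square)
  also have "\<dots> = (lform a x)^2 * (D * bil (Hc c x) p p) + (lform b x)^2 * (D * bil (Hc c x) q q)"
    by (simp add: c2 algebra_simps)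
  also have "\<dots> = (lform a x)^3 * bil (Hc c p) p p + (lform b x)^3 * bil (Hc c q) q q"
    by (simp add: e1 e2 power3_eq_cube power2_eq_square)
  finally show ?thesis unfolding D_def p_def q_def .
qed

lemma hess_quad: "pd i (pd j (\<lambda>x. \<Sum>i\<in>UNIV. \<Sum>k\<in>UNIV. c i k * x$i * x$k)) x = c j i + c i j"
proof -
  have "pd j (\<lambda>x. \<Sum>i\<in>UNIV. \<Sum>k\<in>UNIV. c i k * x$i * x$k) = (\<lambda>x. \<Sum>l\<in>UNIV. (c j l + c l j) * x$l)"
    by (rule ext, rule pd_quad)
  then show ?thesis by (simp add: pd_lin)
qed

lemma hess_cub: "pd i (pd j (\<lambda>x. \<Sum>i\<in>UNIV. \<Sum>k\<in>UNIV. \<Sum>m\<in>UNIV. c i k m * x$i * x$k * x$m)) x = Hc c x i j"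
proof -
  have "pd j (\<lambda>x. \<Sum>i\<in>UNIV. \<Sum>k\<in>UNIV. \<Sum>m\<in>UNIV. c i k m * x$i * x$k * x$m)
     = (\<lambda>x. \<Sum>k\<in>UNIV. \<Sum>l\<in>UNIV. (c j k l + c k j l + c k l j) * x$k * x$l)"
    by (rule ext, rule pd_cub)
  then have "pd i (pd j (\<lambda>x. \<Sum>i\<in>UNIV. \<Sum>k\<in>UNIV. \<Sum>m\<in>UNIV. c i k m * x$i * x$k * x$m)) x
     = (\<Sum>l\<in>UNIV. ((c j i l + c i j l + c i l j) + (c j l i + c l j i + c l i j)) * x$l)"
    using pd_quad[of i "\<lambda>k l. c j k l + c k j l + c k l j" x] by simp
  also have "\<dots> = Hc c x i j" unfolding Hc_def Sy_def by (rule sum.cong) (auto simp: algebra_simps)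
  finally show ?thesis .
qed

lemma g_repr: "(\<lambda>x. lform a x * lform b x) = (\<lambda>x. \<Sum>i\<in>UNIV. \<Sum>k\<in>UNIV. (a$i * b$k) * x$i * x$k)"
  by (simp add: fun_eq_iff lform_def sum_3 algebra_simps)
lemma h_repr: "(\<lambda>x. (lform u x)^2) = (\<lambda>x. \<Sum>i\<in>UNIV. \<Sum>k\<in>UNIV. (u$i * u$k) * x$i * x$k)"
  by (simp add: fun_eq_iff lform_def sum_3 algebra_simps power2_eq_square)

lemma J2_gen:
  assumes "\<And>i j. pd i (pd j f) x = A i j" "\<And>i j. A i j = A j i"
  shows "J2 f (\<lambda>x. lform a x * lform b x) (\<lambda>x. (lform u x)^2) x = 4 * bil A (cr a u) (cr b u)"
proof -
  have hg: "pd i (pd j (\<lambda>x. lform a x * lform b x)) x = a$j*b$i + a$i*b$j" for i j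
    unfolding g_repr using hess_quad[of i j "\<lambda>i k. a$i * b$k" x] by simp
  have hh: "pd i (pd j (\<lambda>x. (lform u x)^2)) x = u$j*u$i + u$i*u$j" for i j
    unfolding h_repr using hess_quad[of i j "\<lambda>i k. u$i * u$k" x] by simp
  have "J2 f (\<lambda>x. lform a x * lform b x) (\<lambda>x. (lform u x)^2) x
      = Jm A (\<lambda>i j. a$j*b$i + a$i*b$j) (\<lambda>i j. u$j*u$i + u$i*u$j)"
    unfolding J2_def Jm_def hg hh assms(1) ..
  also have "\<dots> = 4 * bil A (cr a u) (cr b u)" by (rule Jm_key, rule assms(2))
  finally show ?thesis .
qed


lemma lform_swap_det: "lform a (cr b e) = lform e (cr a b)"
  by (simp add: lform_def sum_3 cr_nth algebra_simps)

lemma cr_nonzero: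
  assumes indep: "\<forall>s t :: complex. s *s a + t *s b = 0 \<longrightarrow> s = 0 \<and> t = 0"
  shows "cr a b \<noteq> 0"
proof
  assume r0: "cr a b = 0"
  have e1: "a$2*b$3 = a$3*b$2" and e2: "a$3*b$1 = a$1*b$3" and e3: "a$1*b$2 = a$2*b$1"
    using r0 by (auto simp: vec_eq_iff forall_3 cr_nth)
  show False
  proof (cases "a = 0")
    case True
    then have "1 *s a + 0 *s b = 0" by simp
    then show False using indep[rule_format, of 1 0] by simp
  next
    case False
    then obtain k where k: "a$k \<noteq> 0" by (auto simp: vec_eq_iff)
    have "b$k *s a + (- a$k) *s b = 0"
      using exhaust_3[of k] e1 e2 e3 by (auto simp: vec_eq_iff forall_3 algebra_simps)
    then show False using indep[rule_format, of "b$k" "- a$k"] k by simp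
  qed
qed

lemma exists_e:
  assumes indep: "\<forall>s t :: complex. s *s a + t *s b = 0 \<longrightarrow> s = 0 \<and> t = 0"
  shows "\<exists>e. lform a (cr b e) \<noteq> 0"
proof -
  obtain k where k: "cr a b $ k \<noteq> 0" using cr_nonzero[OF indep] by (auto simp: vec_eq_iff)
  have "lform (axis k 1) (cr a b) = cr a b $ k"
    using exhaust_3[of k] by (auto simp: lform_def sum_3 axis_def)
  then show ?thesis using k lform_swap_det by metis
qed

lemma quad_back_repr: "(\<lambda>x. a0 * (lform a x)^2 + b0 * (lform b x)^2)
   = (\<lambda>x. \<Sum>i\<in>UNIV. \<Sum>k\<in>UNIV. (a0 * a$i * a$k + b0 * b$i * b$k) * x$i * x$k)"
  by (simp add: fun_eq_iff lform_def sum_3 algebra_simps power2_eq_square)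

lemma cub_back_repr: "(\<lambda>x. a0 * (lform a x)^3 + b0 * (lform b x)^3)
   = (\<lambda>x. \<Sum>i\<in>UNIV. \<Sum>k\<in>UNIV. \<Sum>m\<in>UNIV. (a0 * a$i * a$k * a$m + b0 * b$i * b$k * b$m) * x$i * x$k * x$m)"
  by (simp add: fun_eq_iff lform_def sum_3 algebra_simps power3_eq_cube)

lemma Hc_back: "Hc (\<lambda>i k m. a0 * a$i * a$k * a$m + b0 * b$i * b$k * b$m) x
   = (\<lambda>i j. (6 * a0 * lform a x) * a$i * a$j + (6 * b0 * lform b x) * b$i * b$j)"
  by (simp add: fun_eq_iff Hc_def Sy_def lform_def sum_3 algebra_simps)

lemma quad_part:
  assumes indep: "\<forall>s t :: complex. s *s a + t *s b = 0 \<longrightarrow> s = 0 \<and> t = 0"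
    and fq: "is_quadratic_form f"
  shows "(\<forall>u x. J2 f (\<lambda>x. lform a x * lform b x) (\<lambda>x. (lform u x)^2) x = 0) \<longleftrightarrow>
             (\<exists>a0 b0 :: complex. f = (\<lambda>x. a0 * (lform a x)^2 + b0 * (lform b x)^2))"
proof
  assume H: "\<forall>u x. J2 f (\<lambda>x. lform a x * lform b x) (\<lambda>x. (lform u x)^2) x = 0"
  obtain c where fc: "f = (\<lambda>x. \<Sum>i\<in>UNIV. \<Sum>j\<in>UNIV. c i j * x$i * x$j)"
    using fq unfolding is_quadratic_form_def by blast
  define A where "A = (\<lambda>i j. c j i + c i j)"
  have As: "A i j = A j i" for i j unfolding A_def by simp
  have Ah: "pd i (pd j f) x = A i j" for i j x unfolding fc A_def by (rule hess_quad)
  have Q: "bil A (cr a u) (cr b u) = 0" for u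
    using H J2_gen[OF Ah As, of a b u] by simp
  obtain e where e: "lform a (cr b e) \<noteq> 0" using exists_e[OF indep] by blast
  define D where "D = lform a (cr b e)"
  have D0: "D \<noteq> 0" using e D_def by simp
  show "\<exists>a0 b0 :: complex. f = (\<lambda>x. a0 * (lform a x)^2 + b0 * (lform b x)^2)"
  proof (intro exI ext)
    fix x
    have fx: "f x = bil A x x / 2" unfolding fc A_def by (rule quad_repr)
    have co: "D^2 * bil A x x = (lform a x)^2 * bil A (cr b e) (cr b e) + (lform b x)^2 * bil A (cr e a) (cr e a)"
      unfolding D_def by (rule core[OF As Q])
    have "f x = (D^2 * bil A x x) / (2 * D^2)" using fx D0 by simp
    also have "\<dots> = ((lform a x)^2 * bil A (cr b e) (cr b e) + (lform b x)^2 * bil A (cr e a) (cr e a)) / (2 * D^2)"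
      by (simp only: co)
    also have "\<dots> = (bil A (cr b e) (cr b e) / (2 * D^2)) * (lform a x)^2 + (bil A (cr e a) (cr e a) / (2 * D^2)) * (lform b x)^2"
      by (simp add: add_divide_distrib mult.commute)
    finally show "f x = (bil A (cr b e) (cr b e) / (2 * D^2)) * (lform a x)^2 + (bil A (cr e a) (cr e a) / (2 * D^2)) * (lform b x)^2" .
  qed
next
  assume "\<exists>a0 b0 :: complex. f = (\<lambda>x. a0 * (lform a x)^2 + b0 * (lform b x)^2)"
  then obtain a0 b0 where fe: "f = (\<lambda>x. a0 * (lform a x)^2 + b0 * (lform b x)^2)" by blast
  define A where "A = (\<lambda>i j. (2 * a0) * a$i * a$j + (2 * b0) * b$i * b$j)"
  have As: "A i j = A j i" for i j unfolding A_def by (simp add: algebra_simps)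
  have Ah: "pd i (pd j f) x = A i j" for i j x
    unfolding fe quad_back_repr A_def
    using hess_quad[of i j "\<lambda>i k. a0 * a$i * a$k + b0 * b$i * b$k" x] by (simp add: algebra_simps)
  show "\<forall>u x. J2 f (\<lambda>x. lform a x * lform b x) (\<lambda>x. (lform u x)^2) x = 0"
  proof (intro allI)
    fix u x
    show "J2 f (\<lambda>x. lform a x * lform b x) (\<lambda>x. (lform u x)^2) x = 0"
      using J2_gen[OF Ah As, of a b u] back_zero[of "2*a0" a "2*b0" b u] unfolding A_def by simp
  qed
qed

lemma cub_part:
  assumes indep: "\<forall>s t :: complex. s *s a + t *s b = 0 \<longrightarrow> s = 0 \<and> t = 0"
    and fq: "is_cubic_form f"
  shows "(\<forall>u x. J2 f (\<lambda>x. lform a x * lform b x) (\<lambda>x. (lform u x)^2) x = 0) \<longleftrightarrow>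
             (\<exists>a0 b0 :: complex. f = (\<lambda>x. a0 * (lform a x)^3 + b0 * (lform b x)^3))"
proof
  assume H: "\<forall>u x. J2 f (\<lambda>x. lform a x * lform b x) (\<lambda>x. (lform u x)^2) x = 0"
  obtain c where fc: "f = (\<lambda>x. \<Sum>i\<in>UNIV. \<Sum>j\<in>UNIV. \<Sum>k\<in>UNIV. c i j k * x$i * x$j * x$k)"
    using fq unfolding is_cubic_form_def by blast
  have Ah: "pd i (pd j f) y = Hc c y i j" for i j y unfolding fc by (rule hess_cub)
  have Q: "bil (Hc c y) (cr a u) (cr b u) = 0" for y u
  proof -
    have "J2 f (\<lambda>x. lform a x * lform b x) (\<lambda>x. (lform u x)^2) y = 4 * bil (Hc c y) (cr a u) (cr b u)"
      by (rule J2_gen[OF Ah Hc_sym])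
    then show ?thesis using H by simp
  qed
  obtain e where e: "lform a (cr b e) \<noteq> 0" using exists_e[OF indep] by blast
  define D where "D = lform a (cr b e)"
  have D0: "D \<noteq> 0" using e D_def by simp
  show "\<exists>a0 b0 :: complex. f = (\<lambda>x. a0 * (lform a x)^3 + b0 * (lform b x)^3)"
  proof (intro exI ext)
    fix x
    have fx: "f x = bil (Hc c x) x x / 6" unfolding fc by (rule cub_repr)
    have co: "D^3 * bil (Hc c x) x x = (lform a x)^3 * bil (Hc c (cr b e)) (cr b e) (cr b e) + (lform b x)^3 * bil (Hc c (cr e a)) (cr e a) (cr e a)"
      unfolding D_def by (rule core_cub[OF Q])
    have "f x = (D^3 * bil (Hc c x) x x) / (6 * D^3)" using fx D0 by simp
    also have "\<dots> = ((lform a x)^3 * bil (Hc c (cr b e)) (cr b e) (cr b e) + (lform b x)^3 * bil (Hc c (cr e a)) (cr e a) (cr e a)) / (6 * D^3)"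
      by (simp only: co)
    also have "\<dots> = (bil (Hc c (cr b e)) (cr b e) (cr b e) / (6 * D^3)) * (lform a x)^3 + (bil (Hc c (cr e a)) (cr e a) (cr e a) / (6 * D^3)) * (lform b x)^3"
      by (simp add: add_divide_distrib mult.commute)
    finally show "f x = (bil (Hc c (cr b e)) (cr b e) (cr b e) / (6 * D^3)) * (lform a x)^3 + (bil (Hc c (cr e a)) (cr e a) (cr e a) / (6 * D^3)) * (lform b x)^3" .
  qed
next
  assume "\<exists>a0 b0 :: complex. f = (\<lambda>x. a0 * (lform a x)^3 + b0 * (lform b x)^3)"
  then obtain a0 b0 where fe: "f = (\<lambda>x. a0 * (lform a x)^3 + b0 * (lform b x)^3)" by blast
  show "\<forall>u x. J2 f (\<lambda>x. lform a x * lform b x) (\<lambda>x. (lform u x)^2) x = 0"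
  proof (intro allI)
    fix u x
    define A where "A = (\<lambda>i j. (6 * a0 * lform a x) * a$i * a$j + (6 * b0 * lform b x) * b$i * b$j)"
    have As: "A i j = A j i" for i j unfolding A_def by (simp add: algebra_simps)
    have Ah: "pd i (pd j f) x = A i j" for i j
      unfolding fe cub_back_repr hess_cub Hc_back A_def ..
    show "J2 f (\<lambda>x. lform a x * lform b x) (\<lambda>x. (lform u x)^2) x = 0"
      using J2_gen[OF Ah As, of a b u] back_zero[of "6 * a0 * lform a x" a "6 * b0 * lform b x" b u]
      unfolding A_def by simp
  qed
qed

theorem lemma5p3:
  fixes a b :: "complex^3"
  assumes indep: "\<forall>s t :: complex. s *s a + t *s b = 0 \<longrightarrow> s = 0 \<and> t = 0"
  shows "(\<forall>f. is_quadratic_form f \<longrightarrow>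
            ((\<forall>u x. J2 f (\<lambda>x. lform a x * lform b x) (\<lambda>x. (lform u x)^2) x = 0) \<longleftrightarrow>
             (\<exists>a0 b0 :: complex. f = (\<lambda>x. a0 * (lform a x)^2 + b0 * (lform b x)^2))))
       \<and> (\<forall>f. is_cubic_form f \<longrightarrow>
            ((\<forall>u x. J2 f (\<lambda>x. lform a x * lform b x) (\<lambda>x. (lform u x)^2) x = 0) \<longleftrightarrow>
             (\<exists>a0 b0 :: complex. f = (\<lambda>x. a0 * (lform a x)^3 + b0 * (lform b x)^3))))"
  using quad_part[OF indep] cub_part[OF indep] by blast

end
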